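(* Let $f:[0,1]\to\mathbb{R}$ be bounded and let $0<a<1$. Assume that $f(t)=c$ for all $t\in(a,1]$, for some real constant $c$. Then for every $n\in\mathbb{N}$ and every $x\in(a,1)$, \[ |B_nf(x)-f(x)|\leq \|f-c\|\,e^{-nr(x,a)}. \]
   Context: For a bounded function $f:[0,1]\to\mathbb{R}$, $\|f\|=\sup_{t\in[0,1]}|f(t)|$, and $\|f-c\|$ is the supremum norm of $t\mapsto f(t)-c$. The $n$th Bernstein polynomial of $f$ is $B_nf(x)=\sum_{j=0}^n f(j/n)\binom{n}{j}x^j(1-x)^{n-j}$, $x\in[0,1]$. For $x,\theta\in(0,1)$, $r(x,\theta)=\theta\log\frac{\theta}{x}+(1-\theta)\log\frac{1-\theta}{1-x}$. *)

theory Defs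
  imports "HOL-Analysis.Analysis"
begin

definition bernstein :: "nat \<Rightarrow> (real \<Rightarrow> real) \<Rightarrow> real \<Rightarrow> real" where
  "bernstein n f x = (\<Sum>j=0..n. f (real j / real n) * real (n choose j) * x ^ j * (1 - x) ^ (n - j))"

definition supnorm01 :: "(real \<Rightarrow> real) \<Rightarrow> real" where
  "supnorm01 f = (SUP t\<in>{0..1}. \<bar>f t\<bar>)"

definition rent :: "real \<Rightarrow> real \<Rightarrow> real" where
  "rent x \<theta> = \<theta> * ln (\<theta> / x) + (1 - \<theta>) * ln ((1 - \<theta>) / (1 - x))"

end

theory Submission
  imports Defs
begin

theorem corollary2:
  fixes f :: "real \<Rightarrow> real" and a c x :: real and n :: nat
  assumes bdd: "bounded (f ` {0..1})"
    and a: "0 < a" "a < 1"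
    and const: "\<And>t. a < t \<Longrightarrow> t \<le> 1 \<Longrightarrow> f t = c"
    and x: "a < x" "x < 1"
  shows "\<bar>bernstein n f x - f x\<bar> \<le> supnorm01 (\<lambda>t. f t - c) * exp (- real n * rent x a)"
proof -
  define M where "M = supnorm01 (\<lambda>t. f t - c)"
  define p where "p j = real (n choose j) * x ^ j * (1 - x) ^ (n - j)" for j
  have x0: "0 < x" using a x by linarith
  have fx: "f x = c" using const x by simp
  have bddA: "bdd_above ((\<lambda>t. \<bar>f t - c\<bar>) ` {0..1})"
  proof -
    obtain B where B: "\<And>y. y \<in> f ` {0..1} \<Longrightarrow> norm y \<le> B"
      using bdd unfolding bounded_iff by auto
    show ?thesis
      proof (rule bdd_aboveI[where M="B + \<bar>c\<bar>"])
      fix y assume "y \<in> (\<lambda>t. \<bar>f t - c\<bar>) ` {0..1}"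
      then obtain t where t: "t \<in> {0..1}" "y = \<bar>f t - c\<bar>" by auto
      have "norm (f t) \<le> B" using B t(1) by auto
      then show "y \<le> B + \<bar>c\<bar>" using t(2) by simp
    qed
  qed
  have Mle: "\<bar>f t - c\<bar> \<le> M" if "t \<in> {0..1}" for t
    unfolding M_def supnorm01_def by (rule cSUP_upper[OF that bddA])
  have M0: "0 \<le> M" using Mle[of 0] by auto
  have p0: "0 \<le> p j" for j using x x0 by (simp add: p_def)
  have sump: "(\<Sum>j=0..n. p j) = 1"
    using binomial_ring[of x "1 - x" n] by (simp add: p_def atLeast0AtMost mult.commute mult.left_commute)
  have bern: "bernstein n f x = (\<Sum>j=0..n. f (real j / real n) * p j)"
    unfolding bernstein_def p_def by (simp add: mult.assoc)
  have "bernstein n f x - f x = (\<Sum>j=0..n. f (real j / real n) * p j) - c * (\<Sum>j=0..n. p j)"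
    using sump fx bern by simp
  also have "\<dots> = (\<Sum>j=0..n. (f (real j / real n) - c) * p j)"
    by (simp add: sum_distrib_left sum_subtractf left_diff_distrib)
  finally have diffeq: "bernstein n f x - f x = (\<Sum>j=0..n. (f (real j / real n) - c) * p j)" .
  define t where "t = a * (1 - x) / (x * (1 - a))"
  have t0: "0 < t" using a x x0 by (simp add: t_def)
  have t1: "t < 1" using a x x0 proof -
    have "a * (1 - x) < x * (1 - a)" using a x by (simp add: algebra_simps)
    moreover have "0 < x * (1 - a)" using a x0 by simp
    ultimately show ?thesis unfolding t_def by simp
  qed
  have termb: "\<bar>(f (real j / real n) - c) * p j\<bar> \<le> M * (t powr (real j - real n * a) * p j)"
    if j: "j \<in> {0..n}" for j
  proof (cases "real j / real n \<le> a")
    case True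
    have jn: "real j / real n \<in> {0..1}" using j
      by (cases "n = 0") (auto simp: field_simps)
    have "real j \<le> real n * a"
    proof (cases "n = 0")
      case False then show ?thesis using True by (simp add: field_simps)
    qed (use j in auto)
    then have "1 \<le> t powr (real j - real n * a)"
    proof -
      have "ln t < 0" using t0 t1 by simp
      then have "0 \<le> (real j - real n * a) * ln t"
        using \<open>real j \<le> real n * a\<close> by (intro mult_nonpos_nonpos) auto
      then show ?thesis using t0 by (simp add: powr_def)
    qed
    then have "p j \<le> t powr (real j - real n * a) * p j"
      using p0[of j] by (simp add: mult_le_cancel_right1 )
    moreover have "\<bar>(f (real j / real n) - c) * p j\<bar> \<le> M * p j"
      using Mle[OF jn] p0[of j] by (simp add: abs_mult mult_right_mono)
    ultimately show ?thesis using M0 by (meson mult_left_mono order_trans)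
  next
    case False
    then have "n \<noteq> 0" using a by (cases "n = 0") auto
    then have "f (real j / real n) = c" using False j by (intro const) (auto simp: field_simps)
    then show ?thesis using M0 p0[of j] t0 by simp
  qed
  have sumt: "(\<Sum>j=0..n. t powr (real j - real n * a) * p j)
      = t powr (- real n * a) * (t * x + (1 - x)) ^ n"
  proof -
    have "(\<Sum>j=0..n. t powr (real j - real n * a) * p j)
        = t powr (- real n * a) * (\<Sum>j=0..n. real (n choose j) * (t * x) ^ j * (1 - x) ^ (n - j))"
      unfolding sum_distrib_left
    proof (rule sum.cong)
      fix j assume "j \<in> {0..n}"
      have "t powr (real j - real n * a) = t ^ j * t powr (- real n * a)"
        using t0 powr_add[of t "real j" "- real n * a"] by (simp add: powr_realpow)
      then show "t powr (real j - real n * a) * p j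
          = t powr (- real n * a) * (real (n choose j) * (t * x) ^ j * (1 - x) ^ (n - j))"
        by (simp add: p_def power_mult_distrib)
    qed simp
    also have "\<dots> = t powr (- real n * a) * (t * x + (1 - x)) ^ n"
      using binomial_ring[of "t * x" "1 - x" n] by (simp add: atLeast0AtMost mult.commute mult.left_commute)
    finally show ?thesis .
  qed
  have ident: "t powr (- real n * a) * (t * x + (1 - x)) ^ n = exp (- real n * rent x a)"
  proof -
    have tx: "t * x + (1 - x) = (1 - x) / (1 - a)" using a x x0
      by (simp add: t_def field_simps)
    have pos: "0 < (1 - x) / (1 - a)" using a x by simp
    have "t powr (- real n * a) * (t * x + (1 - x)) ^ n
        = exp (real n * (- a * ln t + ln ((1 - x) / (1 - a))))"
    proof -
      have e1: "((1 - x) / (1 - a)) ^ n = exp (real n * ln ((1 - x) / (1 - a)))"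
        using pos by (simp add: exp_of_nat_mult)
      have e2: "t powr (- real n * a) = exp (- real n * a * ln t)"
        using t0 by (simp add: powr_def)
      show ?thesis unfolding tx e1 e2 exp_add[symmetric] by (simp add: algebra_simps)
    qed
    also have "- a * ln t + ln ((1 - x) / (1 - a)) = - rent x a"
    proof -
      have lt: "ln t = ln a + ln (1 - x) - ln x - ln (1 - a)"
        unfolding t_def using a x x0 by (simp add: ln_div ln_mult)
      have l2: "ln ((1 - x) / (1 - a)) = ln (1 - x) - ln (1 - a)"
        using a x by (simp add: ln_div)
      have r: "rent x a = a * (ln a - ln x) + (1 - a) * (ln (1 - a) - ln (1 - x))"
        unfolding rent_def using a x x0 by (simp add: ln_div)
      show ?thesis unfolding lt l2 r by (simp add: algebra_simps)
    qed
    finally show ?thesis by simp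
  qed
  have "\<bar>bernstein n f x - f x\<bar> \<le> (\<Sum>j=0..n. \<bar>(f (real j / real n) - c) * p j\<bar>)"
    unfolding diffeq by (rule sum_abs)
  also have "\<dots> \<le> (\<Sum>j=0..n. M * (t powr (real j - real n * a) * p j))"
    by (rule sum_mono) (rule termb)
  also have "\<dots> = M * exp (- real n * rent x a)"
    unfolding sum_distrib_left[symmetric] sumt ident ..
  finally show ?thesis unfolding M_def .
qed

end
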